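(* Let $\lambda$ be an indeterminate and define polynomials $S_n\in\mathbb{R}[\lambda]$ by $S_1=1$ and, for integers $n\ge2$, $$S_n=S_{n-1}-\sum_{j=1}^{n-1}(-\lambda)^j\,S_{n-j}\,M_{j,n}(1).$$ Then for all integers $0\le k<n$, the coefficient of $\lambda^k$ in $S_n$ equals $P_k(n)$; in particular $S_n|_{\lambda=1}=\sigma(n)$ and $S_n|_{\lambda=-1}=\rho(n)$.
   Context: For integers $n>j>0$ and real $y\in[0,1]$, $M_{j,n}(y)=\sum_{n_1>\cdots>n_j>0}\prod_{i=1}^{j}z_i^{n_i}/n_i$ with $z_1=y/n$ and $z_i=(n+2-i)/(n+1-i)$ for $1<i\le j$. The functions $P_k$ are defined by $P_0(u)=1$ for $u\ge0$, and for integers $k\ge1$, $P_k:[k,\infty)\to\mathbb{R}$ with $P_k(k)=0$ and $uP_k'(u)=P_{k-1}(u-1)$ for $u\ge k$. $\rho$ is the Dickman function (continuous, $\rho=1$ on $[0,1]$, $u\rho'(u)=-\rho(u-1)$ for $u>1$); $\sigma(u)=(u+1)\omega(u+1)$ with $\omega$ the Buchstab function (continuous on $[1,\infty)$, $u\omega(u)=1$ on $[1,2]$, $u\omega'(u)=\omega(u-1)-\omega(u)$ for $u>2$). *)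

theory Defs
  imports "HOL-Analysis.Analysis" "HOL-Computational_Algebra.Polynomial"
begin

text \<open>The point z_i of M_{j,n}; here indexed from 0, so mz n y 0 = y/n and
  mz n y i = (n+1-i)/(n-i) for i >= 1 (i.e. z_{i+1} in the paper's 1-based indexing).\<close>
definition mz :: "nat \<Rightarrow> real \<Rightarrow> nat \<Rightarrow> real" where
  "mz n y i = (if i = 0 then y / real n else (real n + 1 - real i) / (real n - real i))"

definition dec_tuples :: "nat \<Rightarrow> nat list set" where
  "dec_tuples j = {ns. length ns = j \<and> sorted_wrt (>) ns \<and> (\<forall>m\<in>set ns. m > 0)}"

definition M :: "nat \<Rightarrow> nat \<Rightarrow> real \<Rightarrow> real" where
  "M j n y = (\<Sum>\<^sub>\<infinity>ns\<in>dec_tuples j. \<Prod>i<j. mz n y i ^ (ns ! i) / real (ns ! i))"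

fun S :: "nat \<Rightarrow> real poly" where
  "S 0 = 0"
| "S (Suc 0) = 1"
| "S (Suc (Suc m)) = S (Suc m) -
     (\<Sum>j\<in>{1..Suc m}. [:0, -1:] ^ j * S (Suc (Suc m) - j) * [:M j (Suc (Suc m)) 1:])"

end

theory Submission
  imports Defs
begin


definition D :: "nat \<Rightarrow> nat \<Rightarrow> nat list set" where
  "D j m = {ns \<in> dec_tuples j. \<forall>x\<in>set ns. x < m}"

fun T :: "nat \<Rightarrow> nat \<Rightarrow> real \<Rightarrow> nat \<Rightarrow> real" where
  "T 0 n w m = 1"
| "T (Suc j) n w m = (\<Sum>k<m. (w / real n) ^ k / real k * T j (n - 1) (real n) k)"

lemma mz_Suc: "n \<ge> 1 \<Longrightarrow> mz n y (Suc i) = mz (n - 1) (real n) i"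
  by (auto simp: mz_def of_nat_diff)

lemma mz0: "mz n y 0 = y / real n"
  by (simp add: mz_def)

lemma D_finite: "finite (D j m)"
proof -
  have "D j m \<subseteq> {ns. set ns \<subseteq> {..<m} \<and> length ns = j}"
    by (auto simp: D_def dec_tuples_def)
  moreover have "finite {ns. set ns \<subseteq> {..<m} \<and> length ns = j}"
    by (rule finite_lists_length_eq) simp
  ultimately show ?thesis by (rule finite_subset)
qed

lemma D_0: "D 0 m = {[]}"
  by (auto simp: D_def dec_tuples_def)

lemma D_Suc: "D (Suc j) m = (\<lambda>(k, ns). k # ns) ` (SIGMA k:{0<..<m}. D j k)"
proof (rule set_eqI, rule iffI)
  fix xs assume "xs \<in> D (Suc j) m"
  then obtain k ns where xs: "xs = k # ns" and "length ns = j"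
    by (auto simp: D_def dec_tuples_def length_Suc_conv)
  with \<open>xs \<in> D (Suc j) m\<close> show "xs \<in> (\<lambda>(k, ns). k # ns) ` (SIGMA k:{0<..<m}. D j k)"
    by (auto simp: D_def dec_tuples_def image_iff)
next
  fix xs assume "xs \<in> (\<lambda>(k, ns). k # ns) ` (SIGMA k:{0<..<m}. D j k)"
  then show "xs \<in> D (Suc j) m"
    apply (auto simp: D_def dec_tuples_def)
    using less_trans by blast
qed

lemma T_trunc:
  "j \<le> n \<Longrightarrow> (\<Sum>ns\<in>D j m. \<Prod>i<j. mz n y i ^ (ns ! i) / real (ns ! i)) = T j n y m"
proof (induction j arbitrary: n y m)
  case 0
  then show ?case by (simp add: D_0)
next
  case (Suc j)
  have n1: "n \<ge> 1" using Suc.prems by simp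
  have inj: "inj_on (\<lambda>(k, ns). k # ns) (SIGMA k:{0<..<m}. D j k)"
    by (auto simp: inj_on_def)
  have "(\<Sum>ns\<in>D (Suc j) m. \<Prod>i<Suc j. mz n y i ^ (ns ! i) / real (ns ! i))
      = (\<Sum>(k,ns)\<in>(SIGMA k:{0<..<m}. D j k). \<Prod>i<Suc j. mz n y i ^ ((k#ns) ! i) / real ((k#ns) ! i))"
    unfolding D_Suc by (subst sum.reindex[OF inj]) (simp add: case_prod_unfold)
  also have "\<dots> = (\<Sum>k\<in>{0<..<m}. \<Sum>ns\<in>D j k. \<Prod>i<Suc j. mz n y i ^ ((k#ns) ! i) / real ((k#ns) ! i))"
    by (subst sum.Sigma[symmetric]) (auto simp: D_finite)
  also have "\<dots> = (\<Sum>k\<in>{0<..<m}. (y / real n) ^ k / real k * T j (n - 1) (real n) k)"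
  proof (rule sum.cong[OF refl])
    fix k
    have "(\<Sum>ns\<in>D j k. \<Prod>i<Suc j. mz n y i ^ ((k#ns) ! i) / real ((k#ns) ! i))
        = (\<Sum>ns\<in>D j k. (y / real n) ^ k / real k * (\<Prod>i<j. mz (n - 1) (real n) i ^ (ns ! i) / real (ns ! i)))"
      by (simp only: prod.lessThan_Suc_shift nth_Cons_0 nth_Cons_Suc mz_Suc[OF n1] mz0)
    also have "\<dots> = (y / real n) ^ k / real k * T j (n - 1) (real n) k"
    proof -
      have "j \<le> n - 1" using Suc.prems by simp
      then show ?thesis
        by (simp only: sum_distrib_left[symmetric] Suc.IH)
    qed
    finally show "(\<Sum>ns\<in>D j k. \<Prod>i<Suc j. mz n y i ^ ((k#ns) ! i) / real ((k#ns) ! i))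
        = (y / real n) ^ k / real k * T j (n - 1) (real n) k" .
  qed
  also have "\<dots> = T (Suc j) n y m"
  proof -
    have "{..<m} = (if m = 0 then {} else insert 0 {0<..<m})" by auto
    then show ?thesis by (auto simp: sum.insert)
  qed
  finally show ?case .
qed

lemma finite_subset_mono_cover:
  assumes "mono (F :: nat \<Rightarrow> 'a set)" "finite G" "\<forall>x\<in>G. \<exists>m. x \<in> F m"
  shows "\<exists>m. G \<subseteq> F m"
  using assms(2,3)
proof (induction G rule: finite_induct)
  case empty then show ?case by auto
next
  case (insert x G)
  then obtain m1 m2 where "G \<subseteq> F m1" "x \<in> F m2" by auto
  moreover have "F m1 \<subseteq> F (max m1 m2)" "F m2 \<subseteq> F (max m1 m2)"
    using assms(1) by (auto simp: mono_def)
  ultimately show ?case by blast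
qed

lemma has_sum_exhaust:
  fixes f :: "'a \<Rightarrow> real"
  assumes nn: "\<And>x. x \<in> A \<Longrightarrow> f x \<ge> 0"
    and mono: "mono F" and fin: "\<And>m. finite (F m)" and sub: "\<And>m. F m \<subseteq> A"
    and cover: "\<And>x. x \<in> A \<Longrightarrow> \<exists>m. x \<in> F m"
    and lim: "(\<lambda>m. sum f (F m)) \<longlonglongrightarrow> L"
  shows "(f has_sum L) A"
proof -
  have inc: "incseq (\<lambda>m. sum f (F m))"
    unfolding incseq_def
  proof (intro allI impI)
    fix m m' :: nat assume "m \<le> m'"
    then have "F m \<subseteq> F m'" using mono by (auto simp: mono_def)
    then show "sum f (F m) \<le> sum f (F m')"
      by (intro sum_mono2 fin) (use sub nn in blast)+
  qed
  have leL: "sum f (F m) \<le> L" for m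
    using incseq_le[OF inc lim] by simp
  have bnd: "sum f G \<le> L" if G1: "finite G" and G2: "G \<subseteq> A" for G
  proof -
    obtain m where "G \<subseteq> F m"
      using finite_subset_mono_cover[OF mono G1] cover G2 by blast
    then have "sum f G \<le> sum f (F m)"
      by (intro sum_mono2 fin) (use sub nn in blast)+
    then show ?thesis using leL[of m] by simp
  qed
  have bdd: "bdd_above (sum f ` {G. G \<subseteq> A \<and> finite G})"
    using bnd by (auto intro!: bdd_aboveI[of _ L])
  have hs: "(f has_sum (SUP G\<in>{G. finite G \<and> G \<subseteq> A}. sum f G)) A"
    by (rule nonneg_bdd_above_has_sum[OF nn bdd])
  define S where "S = (SUP G\<in>{G. finite G \<and> G \<subseteq> A}. sum f G)"
  have ne: "{G. finite G \<and> G \<subseteq> A} \<noteq> {}" by auto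
  have bdd': "bdd_above (sum f ` {G. finite G \<and> G \<subseteq> A})"
    using bdd by (simp add: conj_commute)
  have "S \<le> L" unfolding S_def
    by (rule cSUP_least[OF ne]) (use bnd in auto)
  moreover have "sum f (F m) \<le> S" for m unfolding S_def
    by (rule cSUP_upper2[OF bdd', of "F m"]) (use fin sub in auto)
  then have "L \<le> S" by (intro LIMSEQ_le_const2[OF lim]) auto
  ultimately have "S = L" by simp
  with hs show ?thesis by (simp add: S_def)
qed

lemma mz_nonneg: "y \<ge> 0 \<Longrightarrow> i < n \<Longrightarrow> mz n y i \<ge> 0"
  by (auto simp: mz_def)

lemma M_lim:
  assumes "j \<le> n" "y \<ge> 0" "(\<lambda>m. T j n y m) \<longlonglongrightarrow> L"
  shows "M j n y = L"
proof -
  let ?f = "\<lambda>ns. \<Prod>i<j. mz n y i ^ (ns ! i) / real (ns ! i)"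
  have "(?f has_sum L) (dec_tuples j)"
  proof (rule has_sum_exhaust[where F = "D j"])
    show "?f ns \<ge> 0" if "ns \<in> dec_tuples j" for ns
      using assms(1,2) by (intro prod_nonneg) (auto intro!: divide_nonneg_nonneg zero_le_power mz_nonneg)
    show "mono (D j)" by (auto simp: mono_def D_def)
    show "finite (D j m)" for m by (rule D_finite)
    show "D j m \<subseteq> dec_tuples j" for m by (auto simp: D_def)
    show "\<exists>m. ns \<in> D j m" if "ns \<in> dec_tuples j" for ns
      using that by (auto simp: D_def intro!: exI[of _ "Suc (sum_list ns)"] dest: member_le_sum_list)
    show "(\<lambda>m. sum ?f (D j m)) \<longlonglongrightarrow> L"
      using assms(3) by (simp add: T_trunc[OF assms(1)])
  qed
  then show ?thesis by (simp add: M_def infsumI)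
qed

lemma M_0: "M 0 n y = 1"
proof -
  have "dec_tuples 0 = {[]}" by (auto simp: dec_tuples_def)
  then show ?thesis by (simp add: M_def)
qed

lemma T_nonneg: "w \<ge> 0 \<Longrightarrow> T j n w m \<ge> 0"
proof (induction j arbitrary: n w m)
  case 0 then show ?case by simp
next
  case (Suc j)
  show ?case using Suc by (auto intro!: sum_nonneg mult_nonneg_nonneg divide_nonneg_nonneg)
qed

lemma div_nat_le: "0 \<le> (a::real) \<Longrightarrow> 1 \<le> k \<Longrightarrow> a / real k \<le> a"
proof -
  assume a: "0 \<le> a" and k: "1 \<le> k"
  have "a * 1 \<le> a * real k" using a k by (intro mult_left_mono) auto
  then show ?thesis using k by (simp add: divide_le_eq)
qed

lemma T_bound:
  "j < n \<Longrightarrow> T j n (real n + 1) m \<le> real m ^ j * ((real n + 1) / (real n + 1 - real j)) ^ m"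
proof (induction j arbitrary: n m)
  case 0 then show ?case by simp
next
  case (Suc j)
  have n1: "n \<ge> 1" and jn: "j < n - 1" using Suc.prems by auto
  have rn: "real (n - 1) + 1 = real n" using n1 by (simp add: of_nat_diff)
  define q where "q = (real n + 1) / (real n - real j)"
  have q1: "q \<ge> 1" using Suc.prems by (simp add: q_def)
  have IH: "T j (n - 1) (real n) k \<le> real k ^ j * (real n / (real n - real j)) ^ k" for k
    using Suc.IH[OF jn, of k] rn n1 by (simp add: of_nat_diff)
  have tm: "((real n + 1) / real n) ^ k / real k * T j (n - 1) (real n) k \<le> real m ^ j * q ^ m"
    if "k < m" for k
  proof (cases "k = 0")
    case True
    then show ?thesis using q1 by simp
  next
    case False
    have Tn: "T j (n - 1) (real n) k \<ge> 0" by (rule T_nonneg) simp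
    have "((real n + 1) / real n) ^ k / real k * T j (n - 1) (real n) k
        \<le> ((real n + 1) / real n) ^ k * T j (n - 1) (real n) k"
      using False Tn div_nat_le[of "((real n + 1) / real n) ^ k * T j (n - 1) (real n) k" k]
      by (simp add: mult_ac)
    also have "\<dots> \<le> ((real n + 1) / real n) ^ k * (real k ^ j * (real n / (real n - real j)) ^ k)"
      by (intro mult_left_mono IH) simp
    also have "\<dots> = real k ^ j * q ^ k"
    proof -
      have "((real n + 1) / real n) * (real n / (real n - real j)) = q"
        using n1 by (simp add: q_def)
      then show ?thesis by (simp add: power_mult_distrib[symmetric] mult_ac)
    qed
    also have "\<dots> \<le> real m ^ j * q ^ m"
      using that q1 by (intro mult_mono power_mono power_increasing) auto
    finally show ?thesis .
  qed
  have "T (Suc j) n (real n + 1) m \<le> (\<Sum>k<m. real m ^ j * q ^ m)"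
    by (simp only: T.simps) (intro sum_mono tm, simp)
  also have "\<dots> = real m ^ Suc j * q ^ m" by simp
  finally show ?case using Suc.prems by (simp add: q_def)
qed

lemma summable_kpow:
  fixes x :: real
  assumes "norm x < 1"
  shows "summable (\<lambda>k. real k ^ j * x ^ k)"
  using assms
proof (induction j arbitrary: x)
  case 0 then show ?case by (simp add: summable_geometric)
next
  case (Suc j)
  have "summable (\<lambda>k. diffs (\<lambda>k. real k ^ j) k * x ^ k)"
    by (rule termdiff_converges[where K = 1]) (use Suc in auto)
  then have "summable (\<lambda>k. real (Suc k) ^ Suc j * x ^ k)"
    by (simp add: diffs_def)
  then have "summable (\<lambda>k. real (Suc k) ^ Suc j * x ^ k * x)"
    by (rule summable_mult2)
  then have "summable (\<lambda>k. real (Suc k) ^ Suc j * x ^ Suc k)"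
    by (simp add: mult_ac)
  then show ?case by (subst summable_Suc_iff[symmetric]) simp
qed

definition cc :: "nat \<Rightarrow> nat \<Rightarrow> nat \<Rightarrow> real" where
  "cc j n k = T j (n - 1) (real n) k / (real k * real n ^ k)"

definition Msr :: "nat \<Rightarrow> nat \<Rightarrow> real \<Rightarrow> real" where
  "Msr j n y = (\<Sum>k. cc j n k * y ^ k)"

lemma cc_nonneg: "cc j n k \<ge> 0"
  unfolding cc_def by (intro divide_nonneg_nonneg T_nonneg) auto

lemma cc_summable:
  assumes "Suc j < n" "0 \<le> z" "z \<le> 3/2"
  shows "summable (\<lambda>k. cc j n k * z ^ k)"
proof (rule summable_comparison_test[OF _ summable_kpow[of "3/4" j]])
  have n1: "n \<ge> 1" and jn: "j < n - 1" using assms by auto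
  have rn: "real (n - 1) + 1 = real n" using n1 by (simp add: of_nat_diff)
  have nj: "real n - real j \<ge> 2" using assms by linarith
  show "\<exists>N. \<forall>k\<ge>N. norm (cc j n k * z ^ k) \<le> real k ^ j * (3 / 4) ^ k"
  proof (intro exI[of _ 1] allI impI)
    fix k :: nat assume k: "k \<ge> 1"
    have Tb: "T j (n - 1) (real n) k \<le> real k ^ j * (real n / (real n - real j)) ^ k"
      using T_bound[OF jn, of k] rn n1 by (simp add: of_nat_diff)
    have T0: "T j (n - 1) (real n) k \<ge> 0" by (rule T_nonneg) simp
    have "norm (cc j n k * z ^ k) = T j (n - 1) (real n) k * (z / real n) ^ k / real k"
      using T0 assms by (simp add: cc_def power_divide abs_mult mult_ac)
    also have "\<dots> \<le> T j (n - 1) (real n) k * (z / real n) ^ k"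
      using k T0 assms by (intro div_nat_le) auto
    also have "\<dots> \<le> real k ^ j * (real n / (real n - real j)) ^ k * (z / real n) ^ k"
      using assms by (intro mult_right_mono Tb) auto
    also have "\<dots> = real k ^ j * (z / (real n - real j)) ^ k"
    proof -
      have e: "(real n / (real n - real j)) * (z / real n) = z / (real n - real j)"
        using n1 by simp
      have "real k ^ j * (real n / (real n - real j)) ^ k * (z / real n) ^ k
          = real k ^ j * ((real n / (real n - real j)) * (z / real n)) ^ k"
        by (simp only: power_mult_distrib mult.assoc)
      then show ?thesis by (simp only: e)
    qed
    also have "\<dots> \<le> real k ^ j * (3/4) ^ k"
    proof (intro mult_left_mono power_mono)
      show "z / (real n - real j) \<le> 3/4"
        using nj assms by (simp add: divide_le_eq)
    qed (use assms nj in auto)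
    finally show "norm (cc j n k * z ^ k) \<le> real k ^ j * (3 / 4) ^ k" .
  qed
qed simp

lemma T_Suc_partial: "T (Suc j) n y m = (\<Sum>k<m. cc j n k * y ^ k)"
  by (simp add: cc_def power_divide mult_ac)

lemma M_eq_Msr:
  assumes "Suc j < n" "0 \<le> y" "y \<le> 3/2"
  shows "M (Suc j) n y = Msr j n y"
  unfolding Msr_def
proof (rule M_lim)
  show "(\<lambda>m. T (Suc j) n y m) \<longlonglongrightarrow> (\<Sum>k. cc j n k * y ^ k)"
    unfolding T_Suc_partial by (rule summable_LIMSEQ[OF cc_summable[OF assms]])
qed (use assms in auto)

lemma cc_summable':
  assumes "Suc j < n" "norm z \<le> 3/2"
  shows "summable (\<lambda>k. cc j n k * z ^ k)"
proof (rule summable_norm_cancel)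
  have "summable (\<lambda>k. cc j n k * \<bar>z\<bar> ^ k)"
    using assms by (intro cc_summable) auto
  then show "summable (\<lambda>k. norm (cc j n k * z ^ k))"
    using cc_nonneg by (simp add: abs_mult power_abs)
qed

lemma cc_0: "cc j n 0 = 0" by (simp add: cc_def)

lemma aux_pow:
  fixes a c r t y :: real
  assumes "a \<noteq> 0" "c \<noteq> 0" "r \<noteq> 0"
  shows "(a / c) ^ m / r * t * (y / a) ^ m = t / (r * c ^ m) * y ^ m"
  using assms by (simp add: power_divide field_simps)

lemma Msr_key:
  assumes jn: "Suc j < n" and y: "0 \<le> y" "y \<le> 1"
  shows "(real n - y) * (\<Sum>k. diffs (cc j n) k * y ^ k) = M j (n - 1) y"
proof -
  have n1: "n \<ge> 1" using jn by simp
  have npos: "real n > 0" using n1 by simp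
  define b where "b k = T j (n - 1) (real n) (Suc k)" for k
  define x where "x = y / real n"
  have sd: "summable (\<lambda>k. diffs (cc j n) k * y ^ k)"
    by (rule termdiff_converges[where K = "3/2"]) (use y jn cc_summable' in auto)
  have dk: "diffs (cc j n) k * y ^ k = b k * x ^ k / real n" for k
    using npos by (simp add: diffs_def cc_def b_def x_def power_divide del: of_nat_Suc)
  have sb: "summable (\<lambda>k. b k * x ^ k)"
  proof -
    have "summable (\<lambda>k. (diffs (cc j n) k * y ^ k) * real n)"
      by (rule summable_mult2[OF sd])
    then show ?thesis using npos by (simp add: dk)
  qed
  define S where "S = (\<Sum>k. b k * x ^ k)"
  have sumd: "(\<Sum>k. diffs (cc j n) k * y ^ k) = S / real n"
    unfolding dk S_def by (rule suminf_divide[OF sb])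
  have s1: "(\<lambda>k. b k * x ^ k) sums S" using sb by (simp add: S_def summable_sums)
  have s2: "(\<lambda>k. b (Suc k) * x ^ (Suc k)) sums (S - b 0)"
    using s1 by (subst sums_Suc_iff) simp
  have s3: "(\<lambda>k. b k * x ^ (Suc k)) sums (x * S)"
    using sums_mult[OF s1, of x] by (simp add: mult_ac)
  have s4: "(\<lambda>k. (b (Suc k) - b k) * x ^ (Suc k)) sums (S - b 0 - x * S)"
    using sums_diff[OF s2 s3] by (simp add: algebra_simps)
  have lhs: "(real n - y) * (\<Sum>k. diffs (cc j n) k * y ^ k) = (1 - x) * S"
    unfolding sumd x_def using npos by (simp add: field_simps)
  also have "\<dots> = b 0 + (\<Sum>k. (b (Suc k) - b k) * x ^ (Suc k))"
    using sums_unique[OF s4] by (simp add: algebra_simps)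
  also have "\<dots> = M j (n - 1) y"
  proof (cases j)
    case 0
    then show ?thesis by (simp add: b_def M_0)
  next
    case (Suc j')
    have b0: "b 0 = 0" by (simp add: b_def Suc)
    have n2: "n \<ge> 2" using jn by simp
    have dif: "(b (Suc k) - b k) * x ^ (Suc k) = cc j' (n - 1) (Suc k) * y ^ (Suc k)" for k
    proof -
      have rn: "real (n - 1) = real n - 1" using n1 by (simp add: of_nat_diff)
      have "b (Suc k) - b k = (real n / real (n - 1)) ^ Suc k / real (Suc k) * T j' (n - 1 - 1) (real (n - 1)) (Suc k)"
        by (simp add: b_def Suc del: of_nat_Suc)
      moreover have "real (n - 1) > 0" using n2 by simp
      ultimately show ?thesis
        using npos aux_pow[of "real n" "real (n - 1)" "real (Suc k)" "Suc k"
            "T j' (n - 1 - 1) (real (n - 1)) (Suc k)" y]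
        by (simp add: cc_def x_def del: of_nat_Suc)
    qed
    have "(\<Sum>k. (b (Suc k) - b k) * x ^ (Suc k)) = (\<Sum>k. cc j' (n - 1) (Suc k) * y ^ (Suc k))"
      by (simp only: dif)
    also have "\<dots> = Msr j' (n - 1) y"
      unfolding Msr_def using suminf_split_head[OF cc_summable[of j' "n - 1" y]] jn y Suc
      by (simp add: cc_0)
    also have "\<dots> = M j (n - 1) y"
      using M_eq_Msr[of j' "n - 1" y] jn y Suc by simp
    finally show ?thesis by (simp add: b0)
  qed
  finally show ?thesis .
qed

lemma Msr_deriv:
  assumes jn: "Suc j < n" and y: "0 \<le> y" "y \<le> 1"
  shows "(Msr j n has_real_derivative M j (n - 1) y / (real n - y)) (at y)"
proof -
  have "(Msr j n has_real_derivative (\<Sum>k. diffs (cc j n) k * y ^ k)) (at y)"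
    unfolding Msr_def[abs_def]
    by (rule termdiffs_strong[where K = "3/2"]) (use jn y cc_summable in auto)
  moreover have pos: "real n - y \<noteq> 0" using jn y by linarith
  have "M j (n - 1) y / (real n - y) = (\<Sum>k. diffs (cc j n) k * y ^ k)"
    unfolding Msr_key[OF assms, symmetric] by (rule nonzero_mult_div_cancel_left[OF pos])
  ultimately show ?thesis by simp
qed

lemma M_deriv_within:
  assumes jn: "Suc j < n" and y: "0 \<le> y" "y \<le> 1"
  shows "(M (Suc j) n has_real_derivative M j (n - 1) y / (real n - y)) (at y within {0..1})"
proof (rule has_field_derivative_transform_within[where d=1])
  show "(Msr j n has_real_derivative M j (n - 1) y / (real n - y)) (at y within {0..1})"
    by (rule has_field_derivative_at_within[OF Msr_deriv[OF assms]])
  show "Msr j n x = M (Suc j) n x" if "x \<in> {0..1}" for x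
    using M_eq_Msr[of j n x] that jn by simp
qed (use y in auto)

lemma M_deriv_at:
  assumes jn: "Suc j < n" and y: "0 < y" "y < 1"
  shows "(M (Suc j) n has_real_derivative M j (n - 1) y / (real n - y)) (at y)"
proof (rule has_field_derivative_transform_within_open)
  show "(Msr j n has_real_derivative M j (n - 1) y / (real n - y)) (at y)"
    by (rule Msr_deriv) (use assms in auto)
  show "Msr j n x = M (Suc j) n x" if "x \<in> {0<..<1}" for x
    using M_eq_Msr[of j n x] that jn by simp
qed (use y in auto)

lemma M_cont:
  assumes jn: "Suc j < n"
  shows "continuous_on {0..1} (M (Suc j) n)"
  unfolding continuous_on_eq_continuous_within
  by (auto intro: DERIV_continuous[OF M_deriv_within[OF jn]])

lemma M_at0:
  assumes jn: "Suc j < n"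
  shows "M (Suc j) n 0 = 0"
  using M_eq_Msr[of j n 0] jn by (simp add: Msr_def cc_0)

locale Pctx =
  fixes P :: "nat \<Rightarrow> real \<Rightarrow> real"
  assumes P0: "\<And>u. u \<ge> 0 \<Longrightarrow> P 0 u = 1"
    and Pk_init: "\<And>k. k \<ge> 1 \<Longrightarrow> P k (real k) = 0"
    and Pk_deriv: "\<And>k u. k \<ge> 1 \<Longrightarrow> u \<ge> real k \<Longrightarrow>
         ((P k) has_real_derivative (P (k - 1) (u - 1) / u)) (at u within {real k..})"
begin

lemma P_cont:
  assumes "real k \<le> a"
  shows "continuous_on {a..b} (P k)"
proof (cases "k = 0")
  case True
  have "continuous_on {a..b} (P k) = continuous_on {a..b} (\<lambda>_. 1::real)"
    by (rule continuous_on_cong) (use True assms P0 in auto)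
  then show ?thesis by simp
next
  case False
  show ?thesis unfolding continuous_on_eq_continuous_within
  proof
    fix x assume x: "x \<in> {a..b}"
    have "continuous (at x within {real k..}) (P k)"
      using Pk_deriv[of k x] False x assms DERIV_continuous by fastforce
    then show "continuous (at x within {a..b}) (P k)"
      by (rule continuous_within_subset) (use assms in auto)
  qed
qed

lemma P_der_at:
  assumes "k \<ge> 1" "u > real k"
  shows "(P k has_real_derivative P (k - 1) (u - 1) / u) (at u)"
proof -
  have "(P k has_real_derivative P (k - 1) (u - 1) / u) (at u within {real k..})"
    using Pk_deriv assms by simp
  moreover have "at u within {real k..} = at u"
    by (rule at_within_interior) (use assms in simp)
  ultimately show ?thesis by simp
qed

lemma PB:
  "k < n \<Longrightarrow> 0 \<le> y \<Longrightarrow> y \<le> 1 \<Longrightarrow>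
   P k (real n) - P k (real n - y) = (\<Sum>j\<in>{1..k}. (-1)^(j+1) * P (k - j) (real (n - j)) * M j n y)"
proof (induction k arbitrary: n y)
  case 0
  then show ?case using P0 by simp
next
  case (Suc k)
  have kn: "k < n - 1" using Suc.prems by simp
  have n1: "n \<ge> 1" using Suc.prems by simp
  have rn: "real (n - 1) = real n - 1" using n1 by (simp add: of_nat_diff)
  define F where "F y = P (Suc k) (real n) - P (Suc k) (real n - y)
      - (\<Sum>j\<in>{1..Suc k}. (-1)^(j+1) * P (Suc k - j) (real (n - j)) * M j n y)" for y
  have Mc: "continuous_on {0..1} (M j n)" if jJ: "j \<in> {1..Suc k}" for j
  proof -
    obtain j' where "j = Suc j'" using jJ by (cases j) auto
    then show ?thesis using jJ M_cont[of j' n] that Suc.prems by simp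
  qed
  have cont: "continuous_on {0..1} F"
    unfolding F_def
  proof (intro continuous_on_diff continuous_on_const continuous_on_sum continuous_on_mult Mc)
    show "continuous_on {0..1} (\<lambda>y. P (Suc k) (real n - y))"
    proof (rule continuous_on_compose2[OF P_cont[of "Suc k" "real n - 1" "real n"]])
      show "real (Suc k) \<le> real n - 1" using Suc.prems by linarith
    qed (auto intro!: continuous_intros)
  qed
  have ident: "(\<Sum>j\<in>{1..Suc k}. (-1)^(j+1) * P (Suc k - j) (real (n - j)) * M (j - 1) (n - 1) y)
      = P k (real n - y - 1)" if y: "0 \<le> y" "y \<le> 1" for y
  proof -
    have "(\<Sum>j\<in>{1..Suc k}. (-1)^(j+1) * P (Suc k - j) (real (n - j)) * M (j - 1) (n - 1) y)
        = (\<Sum>i\<in>{0..k}. (-1)^i * P (k - i) (real (n - 1 - i)) * M i (n - 1) y)"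
    proof (simp only: One_nat_def sum.shift_bounds_cl_Suc_ivl, intro sum.cong refl)
      fix x assume "x \<in> {0..k}"
      have a: "n - Suc x = n - Suc 0 - x" by arith
      have b: "(-1::real) ^ (Suc x + Suc 0) = (-1) ^ x" by simp
      show "(-1) ^ (Suc x + Suc 0) * P (Suc k - Suc x) (real (n - Suc x)) * M (Suc x - Suc 0) (n - Suc 0) y
          = (-1) ^ x * P (k - x) (real (n - Suc 0 - x)) * M x (n - Suc 0) y"
        by (simp only: a b diff_Suc_Suc diff_zero)
    qed
    also have "\<dots> = P k (real (n - 1)) + (\<Sum>i\<in>{1..k}. (-1)^i * P (k - i) (real (n - 1 - i)) * M i (n - 1) y)"
      by (subst sum.atLeast_Suc_atMost) (auto simp: M_0)
    also have "(\<Sum>i\<in>{1..k}. (-1)^i * P (k - i) (real (n - 1 - i)) * M i (n - 1) y)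
        = - (\<Sum>i\<in>{1..k}. (-1)^(i+1) * P (k - i) (real (n - 1 - i)) * M i (n - 1) y)"
      by (simp add: sum_negf[symmetric])
    also have "(\<Sum>i\<in>{1..k}. (-1)^(i+1) * P (k - i) (real (n - 1 - i)) * M i (n - 1) y)
        = P k (real (n - 1)) - P k (real (n - 1) - y)"
      using Suc.IH[OF kn y] by simp
    finally show ?thesis using rn by (simp add: algebra_simps)
  qed
  have der: "DERIV F y :> 0" if y: "0 < y" "y < 1" for y
  proof -
    have Pd: "DERIV (\<lambda>y. P (Suc k) (real n - y)) y :> P k (real n - y - 1) / (real n - y) * (-1)"
    proof (rule DERIV_chain2[of "P (Suc k)"])
      show "DERIV (P (Suc k)) (real n - y) :> P k (real n - y - 1) / (real n - y)"
        using P_der_at[of "Suc k" "real n - y"] Suc.prems y by simp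
      show "((\<lambda>y. real n - y) has_real_derivative -1) (at y)"
        by (auto intro!: derivative_eq_intros)
    qed
    have Md: "DERIV (\<lambda>y. M j n y) y :> M (j - 1) (n - 1) y / (real n - y)" if jJ: "j \<in> {1..Suc k}" for j
    proof -
      obtain j' where "j = Suc j'" using jJ by (cases j) auto
      then show ?thesis using jJ M_deriv_at[of j' n y] that Suc.prems y by simp
    qed
    have "DERIV F y :> 0 - P k (real n - y - 1) / (real n - y) * (-1)
        - (\<Sum>j\<in>{1..Suc k}. (-1)^(j+1) * P (Suc k - j) (real (n - j)) * (M (j - 1) (n - 1) y / (real n - y)))"
      unfolding F_def[abs_def]
      by (intro DERIV_diff DERIV_const Pd DERIV_sum DERIV_cmult Md)
    moreover have "(\<Sum>j\<in>{1..Suc k}. (-1)^(j+1) * P (Suc k - j) (real (n - j)) * (M (j - 1) (n - 1) y / (real n - y)))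
        = P k (real n - y - 1) / (real n - y)"
    proof -
      have "(\<Sum>j\<in>{1..Suc k}. (-1)^(j+1) * P (Suc k - j) (real (n - j)) * (M (j - 1) (n - 1) y / (real n - y)))
          = (\<Sum>j\<in>{1..Suc k}. (-1)^(j+1) * P (Suc k - j) (real (n - j)) * M (j - 1) (n - 1) y) / (real n - y)"
        by (simp only: times_divide_eq_right sum_divide_distrib)
      also have "\<dots> = P k (real n - y - 1) / (real n - y)"
        using ident[of y] y by simp
      finally show ?thesis .
    qed
    ultimately show ?thesis by simp
  qed
  have F0: "F 0 = 0"
  proof -
    have "M j n 0 = 0" if jJ: "j \<in> {1..Suc k}" for j
    proof -
      obtain j' where "j = Suc j'" using jJ by (cases j) auto
      then show ?thesis using jJ M_at0[of j' n] that Suc.prems by simp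
    qed
    then show ?thesis by (simp add: F_def)
  qed
  have "F y = F 0"
    by (rule DERIV_isconst2[of 0 1]) (use cont der Suc.prems in auto)
  then show ?case using F0 by (simp add: F_def)
qed

lemma coeff_term:
  fixes p :: "real poly"
  shows "coeff ([:0, -1:] ^ j * p * [:c:]) k = (if k < j then 0 else (-1) ^ j * coeff p (k - j) * c)"
proof -
  have "[:0, -1:] = monom (-1 :: real) 1" by (simp add: monom_Suc monom_0)
  then have e: "[:0, -1:] ^ j = monom ((-1 :: real) ^ j) j" by (simp add: monom_power)
  have c1: "coeff (monom ((-1 :: real) ^ j) j * p * [:c:]) k = c * coeff (monom ((-1 :: real) ^ j) j * p) k"
  proof -
    have "monom ((-1 :: real) ^ j) j * p * [:c:] = smult c (monom ((-1 :: real) ^ j) j * p)" by simp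
    then show ?thesis by (simp only: coeff_smult)
  qed
  show ?thesis unfolding e c1 coeff_monom_mult by simp
qed

lemma PC:
  "n \<ge> 1 \<Longrightarrow> (\<forall>k<n. coeff (S n) k = P k (real n)) \<and> (\<forall>k\<ge>n. coeff (S n) k = 0)"
proof (induction n rule: less_induct)
  case (less n)
  show ?case
  proof (cases "n = 1")
    case True
    then show ?thesis using P0 by (auto simp: coeff_1)
  next
    case False
    then obtain m where nm: "n = Suc (Suc m)" using less.prems by (cases n; cases "n - 1") auto
    have IH1: "\<forall>k<Suc m. coeff (S (Suc m)) k = P k (real (Suc m))" "\<forall>k\<ge>Suc m. coeff (S (Suc m)) k = 0"
      using less.IH[of "Suc m"] nm by auto
    have IH2: "\<forall>k<n - j. coeff (S (n - j)) k = P k (real (n - j))" "\<forall>k\<ge>n - j. coeff (S (n - j)) k = 0"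
      if "j \<in> {1..Suc m}" for j
      using less.IH[of "n - j"] nm that by auto
    have cS: "coeff (S n) k = coeff (S (Suc m)) k
        - (\<Sum>j\<in>{1..Suc m}. (if k < j then 0 else (-1) ^ j * coeff (S (n - j)) (k - j) * M j n 1))" for k
      unfolding nm S.simps(3) coeff_diff coeff_sum coeff_term by (rule refl)
    show ?thesis
    proof (intro conjI allI impI)
      fix k assume kn: "n \<le> k"
      have "coeff (S (Suc m)) k = 0" using IH1 kn nm by simp
      moreover have "(if k < j then 0 else (-1) ^ j * coeff (S (n - j)) (k - j) * M j n 1) = 0"
        if "j \<in> {1..Suc m}" for j
        using IH2[OF that] kn that nm by auto
      ultimately show "coeff (S n) k = 0" by (simp add: cS)
    next
      fix k assume kn: "k < n"
      have c1: "coeff (S (Suc m)) k = P k (real (Suc m))"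
      proof (cases "k < Suc m")
        case True then show ?thesis using IH1 by simp
      next
        case False
        then have "k = Suc m" using kn nm by simp
        then show ?thesis using IH1 Pk_init[of "Suc m"] by simp
      qed
      have "(\<Sum>j\<in>{1..Suc m}. (if k < j then 0 else (-1) ^ j * coeff (S (n - j)) (k - j) * M j n 1))
          = (\<Sum>j\<in>{1..Suc m}. (if j \<le> k then (-1) ^ j * P (k - j) (real (n - j)) * M j n 1 else 0))"
      proof (intro sum.cong refl)
        fix j assume j: "j \<in> {1..Suc m}"
        show "(if k < j then 0 else (-1) ^ j * coeff (S (n - j)) (k - j) * M j n 1)
            = (if j \<le> k then (-1) ^ j * P (k - j) (real (n - j)) * M j n 1 else 0)"
          using IH2[OF j] kn j by auto
      qed
      also have "\<dots> = (\<Sum>j\<in>{j\<in>{1..Suc m}. j \<le> k}. (-1) ^ j * P (k - j) (real (n - j)) * M j n 1)"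
        by (simp only: sum.inter_filter[OF finite_atLeastAtMost])
      also have "{j\<in>{1..Suc m}. j \<le> k} = {1..k}" using kn nm by auto
      finally have sm: "(\<Sum>j\<in>{1..Suc m}. (if k < j then 0 else (-1) ^ j * coeff (S (n - j)) (k - j) * M j n 1))
          = (\<Sum>j\<in>{1..k}. (-1) ^ j * P (k - j) (real (n - j)) * M j n 1)" .
      have pb: "P k (real n) - P k (real n - 1) = (\<Sum>j\<in>{1..k}. (-1)^(j+1) * P (k - j) (real (n - j)) * M j n 1)"
        using PB[OF kn, of 1] by simp
      have "(\<Sum>j\<in>{1..k}. (-1)^(j+1) * P (k - j) (real (n - j)) * M j n 1)
          = - (\<Sum>j\<in>{1..k}. (-1) ^ j * P (k - j) (real (n - j)) * M j n 1)"
        by (simp add: sum_negf[symmetric])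
      moreover have e2: "real n - 1 = real (Suc m)" using nm by simp
      ultimately show "coeff (S n) k = P k (real n)"
        using pb c1 sm cS[of k] unfolding e2 by simp
    qed
  qed
qed

lemma P0_der: "x > 0 \<Longrightarrow> DERIV (P 0) x :> 0"
  by (rule has_field_derivative_transform_within_open[of "\<lambda>_. 1" 0 x "{0<..}"]) (auto simp: P0)

lemma PD:
  fixes f :: "real \<Rightarrow> real" and s :: real
  assumes cont: "continuous_on {0..} f"
    and init: "\<And>u. 0 \<le> u \<Longrightarrow> u \<le> 1 \<Longrightarrow> f u = 1"
    and deriv: "\<And>u. u > 1 \<Longrightarrow> (f has_real_derivative s * f (u - 1) / u) (at u)"
  shows "real m \<le> u \<Longrightarrow> u \<le> real m + 1 \<Longrightarrow> (\<Sum>k\<le>m. s ^ k * P k u) = f u"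
proof (induction m arbitrary: u)
  case 0
  then show ?case using P0 init by simp
next
  case (Suc m)
  define a where "a = real (Suc m)"
  define g where "g u = (\<Sum>k\<le>Suc m. s ^ k * P k u) - f u" for u
  have ga: "g a = 0"
  proof -
    have "(\<Sum>k\<le>m. s ^ k * P k a) = f a" using Suc.IH[of a] by (simp add: a_def)
    then show ?thesis using Pk_init[of "Suc m"] by (simp add: g_def a_def)
  qed
  have cont_g: "continuous_on {a..a+1} g"
    unfolding g_def
  proof (intro continuous_on_diff continuous_on_sum continuous_on_mult continuous_on_const)
    show "continuous_on {a..a + 1} (P k)" if "k \<in> {..Suc m}" for k
      by (rule P_cont) (use that in \<open>simp add: a_def\<close>)
    show "continuous_on {a..a + 1} f"
      by (rule continuous_on_subset[OF cont]) (auto simp: a_def)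
  qed
  have der: "DERIV g x :> 0" if x: "a < x" "x < a + 1" for x
  proof -
    have Pd: "DERIV (P k) x :> (if k = 0 then 0 else P (k - 1) (x - 1) / x)" if "k \<in> {..Suc m}" for k
    proof (cases "k = 0")
      case True then show ?thesis using P0_der[of x] x by (simp add: a_def)
    next
      case False then show ?thesis using P_der_at[of k x] x that by (simp add: a_def)
    qed
    have "DERIV g x :> (\<Sum>k\<le>Suc m. s ^ k * (if k = 0 then 0 else P (k - 1) (x - 1) / x)) - s * f (x - 1) / x"
      unfolding g_def[abs_def]
      by (intro DERIV_diff DERIV_sum DERIV_cmult Pd deriv) (use x in \<open>auto simp: a_def\<close>)
    moreover have "(\<Sum>k\<le>Suc m. s ^ k * (if k = 0 then 0 else P (k - 1) (x - 1) / x)) = s * f (x - 1) / x"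
    proof -
      have "(\<Sum>k\<le>Suc m. s ^ k * (if k = 0 then 0 else P (k - 1) (x - 1) / x))
          = (\<Sum>k\<le>m. s / x * (s ^ k * P k (x - 1)))"
        by (subst sum.atMost_Suc_shift) (simp add: algebra_simps)
      also have "\<dots> = s / x * (\<Sum>k\<le>m. s ^ k * P k (x - 1))"
        by (rule sum_distrib_left[symmetric])
      also have "\<dots> = s / x * f (x - 1)"
        using Suc.IH[of "x - 1"] x by (simp add: a_def)
      finally show ?thesis by simp
    qed
    ultimately show ?thesis by simp
  qed
  have "g u = g a"
    by (rule DERIV_isconst2[of a "a + 1"]) (use cont_g der Suc.prems in \<open>auto simp: a_def\<close>)
  then show ?case using ga by (simp add: g_def)
qed

end

lemma poly_sum_lt:
  fixes p :: "real poly"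
  assumes "n \<ge> 1" "\<forall>k\<ge>n. coeff p k = 0"
  shows "poly p x = (\<Sum>k<n. coeff p k * x ^ k)"
proof -
  have dg: "degree p \<le> n - 1" by (rule degree_le) (use assms in auto)
  have "poly p x = (\<Sum>k\<le>degree p. coeff p k * x ^ k)" by (rule poly_altdef)
  also have "\<dots> = (\<Sum>k<n. coeff p k * x ^ k)"
  proof (rule sum.mono_neutral_left)
    show "{..degree p} \<subseteq> {..<n}" using dg assms by auto
  qed (use assms dg in \<open>auto simp: coeff_eq_0\<close>)
  finally show ?thesis .
qed




theorem mainTheorem12:
  fixes P :: "nat \<Rightarrow> real \<Rightarrow> real"
    and rho :: "real \<Rightarrow> real"
    and omega :: "real \<Rightarrow> real"
    and sigma :: "real \<Rightarrow> real"
  assumes P0: "\<And>u. u \<ge> 0 \<Longrightarrow> P 0 u = 1"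
    and Pk_init: "\<And>k. k \<ge> 1 \<Longrightarrow> P k (real k) = 0"
    and Pk_deriv: "\<And>k u. k \<ge> 1 \<Longrightarrow> u \<ge> real k \<Longrightarrow>
         ((P k) has_real_derivative (P (k - 1) (u - 1) / u)) (at u within {real k..})"
    and rho_cont: "continuous_on {0..} rho"
    and rho_init: "\<And>u. 0 \<le> u \<Longrightarrow> u \<le> 1 \<Longrightarrow> rho u = 1"
    and rho_deriv: "\<And>u. u > 1 \<Longrightarrow> (rho has_real_derivative (- rho (u - 1) / u)) (at u)"
    and omega_cont: "continuous_on {1..} omega"
    and omega_init: "\<And>u. 1 \<le> u \<Longrightarrow> u \<le> 2 \<Longrightarrow> u * omega u = 1"
    and omega_deriv: "\<And>u. u > 2 \<Longrightarrow>
         (omega has_real_derivative ((omega (u - 1) - omega u) / u)) (at u)"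
    and sigma_def: "\<And>u. sigma u = (u + 1) * omega (u + 1)"
  shows "(\<forall>n k. k < n \<longrightarrow> coeff (S n) k = P k (real n))
       \<and> (\<forall>n. n \<ge> 1 \<longrightarrow> poly (S n) 1 = sigma (real n))
       \<and> (\<forall>n. n \<ge> 1 \<longrightarrow> poly (S n) (-1) = rho (real n))"
proof -
  interpret Pctx P
    unfolding Pctx_def using P0 Pk_init Pk_deriv by blast
  have part1: "\<forall>n k. k < n \<longrightarrow> coeff (S n) k = P k (real n)"
  proof (intro allI impI)
    fix n k :: nat assume kn: "k < n"
    then have "n \<ge> 1" by simp
    then show "coeff (S n) k = P k (real n)" using PC kn by blast
  qed
  have polyS: "poly (S n) x = (\<Sum>k\<le>n - 1. x ^ k * P k (real n))" if n: "n \<ge> 1" for n x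
  proof -
    have "poly (S n) x = (\<Sum>k<n. coeff (S n) k * x ^ k)"
      by (rule poly_sum_lt) (use PC[OF n] n in auto)
    also have "\<dots> = (\<Sum>k<n. x ^ k * P k (real n))"
      using PC[OF n] by (simp add: mult.commute)
    also have "{..<n} = {..n - 1}" using n by auto
    finally show ?thesis .
  qed
  have sig_eq: "sigma = (\<lambda>u. (u + 1) * omega (u + 1))" by (rule ext) (rule sigma_def)
  have sig_cont: "continuous_on {0..} sigma"
    unfolding sig_eq
  proof (intro continuous_on_mult continuous_intros)
    show "continuous_on {0..} (\<lambda>u. omega (u + 1))"
      by (rule continuous_on_compose2[OF omega_cont]) (auto intro!: continuous_intros)
  qed
  have sig_init: "sigma u = 1" if "0 \<le> u" "u \<le> 1" for u
    using omega_init[of "u + 1"] that by (simp add: sigma_def)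
  have sig_deriv: "(sigma has_real_derivative 1 * sigma (u - 1) / u) (at u)" if u: "u > 1" for u
  proof -
    have od: "DERIV omega (u + 1) :> (omega u - omega (u + 1)) / (u + 1)"
      using omega_deriv[of "u + 1"] u by simp
    have d1: "((\<lambda>u. u + 1) has_real_derivative 1) (at u)"
      by (auto intro!: derivative_eq_intros)
    have d2: "((\<lambda>u. omega (u + 1)) has_real_derivative (omega u - omega (u + 1)) / (u + 1) * 1) (at u)"
      by (rule DERIV_chain2[where f=omega and g="\<lambda>u. u + 1" and x=u, OF od d1])
    have "((\<lambda>u. (u + 1) * omega (u + 1)) has_real_derivative
        1 * omega (u + 1) + (omega u - omega (u + 1)) / (u + 1) * 1 * (u + 1)) (at u)"
      by (rule DERIV_mult[OF d1 d2])
    moreover have "1 * omega (u + 1) + (omega u - omega (u + 1)) / (u + 1) * 1 * (u + 1)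
        = 1 * sigma (u - 1) / u"
      using u by (simp add: sigma_def field_simps)
    ultimately show ?thesis unfolding sig_eq by simp
  qed
  have part2: "\<forall>n. n \<ge> 1 \<longrightarrow> poly (S n) 1 = sigma (real n)"
  proof (intro allI impI)
    fix n :: nat assume n: "n \<ge> 1"
    have "(\<Sum>k\<le>n - 1. 1 ^ k * P k (real n)) = sigma (real n)"
      by (rule PD[of sigma 1, OF sig_cont sig_init sig_deriv]) (use n in \<open>auto simp: of_nat_diff\<close>)
    then show "poly (S n) 1 = sigma (real n)" using polyS[OF n] by simp
  qed
  have part3: "\<forall>n. n \<ge> 1 \<longrightarrow> poly (S n) (-1) = rho (real n)"
  proof (intro allI impI)
    fix n :: nat assume n: "n \<ge> 1"
    have rd: "(rho has_real_derivative (-1) * rho (u - 1) / u) (at u)" if "u > 1" for u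
      using rho_deriv[OF that] by simp
    have "(\<Sum>k\<le>n - 1. (-1) ^ k * P k (real n)) = rho (real n)"
      by (rule PD[of rho "-1", OF rho_cont rho_init rd]) (use n in \<open>auto simp: of_nat_diff\<close>)
    then show "poly (S n) (-1) = rho (real n)" using polyS[OF n] by simp
  qed
  show ?thesis using part1 part2 part3 by blast
qed


end
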